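(* Assume the context distribution is stationary, i.e. $p(x,t)=p(x)p(t)$ on $\mathcal{X}\times[0,T]$ and $p(x\mid t')=p(x)$. Suppose the logging policy has full support, $\pi_0(a\mid x,t)>0$ for all $x\in\mathcal{X}$, $t\in[0,T]$, $a\in\mathcal{A}$, and that $p(\phi(t'))>0$. Then $$\mathrm{Bias}\big(\nabla_\zeta\hat V^{\mathrm{OPFV}}_{t'}(\pi_\zeta;\mathcal{D})\big)=\mathbb{E}_{p(x,t)\pi_\zeta(a\mid x,t')}\!\left[\frac{\mathbb{I}_\phi(t,t')}{p(\phi(t'))}\big(\Delta_q(x,t,t',a)-\Delta_{\hat f}(x,t,t',a)\big)s_\zeta(x,t',a)\right].$$
   Context: Contexts $x\in\mathcal{X}$, finite action set $\mathcal{A}$, continuous time $t$, rewards $r\in[0,r_{\max}]$. Logged data $\mathcal{D}=\{(x_i,t_i,a_i,r_i)\}_{i=1}^n$: $n$ i.i.d. draws $(x,t)\sim p(x,t)$ supported on $\mathcal{X}\times[0,T]$, $a\sim\pi_0(a\mid x,t)$, $r\sim p(r\mid x,t,a)$; reward distributions defined for all $t\ge0$; $q(x,t,a)=\mathbb{E}[r\mid x,t,a]$. Target time $t'>T$. $\pi_\zeta(a\mid x,t)$ is a policy differentiable in a parameter vector $\zeta$, with score $s_\zeta(x,t,a)=\nabla_\zeta\log\pi_\zeta(a\mid x,t)$; the true gradient is $\nabla_\zeta V_{t'}(\pi_\zeta)=\mathbb{E}_{p(x\mid t')\pi_\zeta(a\mid x,t')}[q(x,t',a)s_\zeta(x,t',a)]$.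 A time feature function $\phi$ maps times to labels; $\mathbb{I}_\phi(t,t')=\mathbb{I}\{\phi(t)=\phi(t')\}$, $p(\phi(t'))=\int_0^Tp(s)\mathbb{I}_\phi(s,t')ds$. $\hat f$ is a fixed regressor on $\mathcal{X}\times[0,\infty)\times\mathcal{A}$. The OPFV gradient estimator is $$\nabla_\zeta\hat V^{\mathrm{OPFV}}_{t'}(\pi_\zeta;\mathcal{D})=\frac1n\sum_{i=1}^n\left\{\frac{\mathbb{I}_\phi(t_i,t')}{p(\phi(t'))}\frac{\pi_\zeta(a_i\mid x_i,t')}{\pi_0(a_i\mid x_i,t_i)}\big(r_i-\hat f(x_i,t_i,a_i)\big)s_\zeta(x_i,t',a_i)+\mathbb{E}_{\pi_\zeta(a\mid x_i,t')}\big[\hat f(x_i,t',a)s_\zeta(x_i,t',a)\big]\right\},$$ and its bias is $\mathbb{E}_{\mathcal{D}}[\nabla_\zeta\hat V^{\mathrm{OPFV}}_{t'}(\pi_\zeta;\mathcal{D})]-\nabla_\zeta V_{t'}(\pi_\zeta)$. $\Delta_q(x,t,t',a)=q(x,t,a)-q(x,t',a)$, $\Delta_{\hat f}(x,t,t',a)=\hat f(x,t,a)-\hat f(x,t',a)$. *)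

theory Defs
  imports "HOL-Probability.Probability"
begin

text \<open>Setting. Contexts of type 'x with context distribution Mx; times are reals;
  actions form a finite type 'a; rewards are reals. A logged sample is (x,t,a,r).\<close>

type_synonym ('x,'a) sample = "'x \<times> real \<times> 'a \<times> real"

definition sample_space :: "'x measure \<Rightarrow> ('x, 'a) sample measure" where
  "sample_space Mx = Mx \<Otimes>\<^sub>M (borel \<Otimes>\<^sub>M (count_space UNIV \<Otimes>\<^sub>M borel))"

definition action_meas :: "('a::finite \<Rightarrow> real) \<Rightarrow> 'a measure" where
  "action_meas w = point_measure UNIV (\<lambda>a. ennreal (w a))"

definition sample_measure ::
  "'x measure \<Rightarrow> ('x \<times> real) measure \<Rightarrow> ('x \<Rightarrow> real \<Rightarrow> 'a::finite \<Rightarrow> real)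
   \<Rightarrow> ('x \<Rightarrow> real \<Rightarrow> 'a \<Rightarrow> real measure) \<Rightarrow> ('x, 'a) sample measure" where
  "sample_measure Mx Pxt pi0 R =
     Pxt \<bind> (\<lambda>xt. action_meas (pi0 (fst xt) (snd xt)) \<bind>
       (\<lambda>a. R (fst xt) (snd xt) a \<bind>
         (\<lambda>r. return (sample_space Mx) (fst xt, snd xt, a, r))))"

definition data_measure ::
  "nat \<Rightarrow> 'x measure \<Rightarrow> ('x \<times> real) measure \<Rightarrow> ('x \<Rightarrow> real \<Rightarrow> 'a::finite \<Rightarrow> real)
   \<Rightarrow> ('x \<Rightarrow> real \<Rightarrow> 'a \<Rightarrow> real measure) \<Rightarrow> (nat \<Rightarrow> ('x, 'a) sample) measure" where
  "data_measure n Mx Pxt pi0 R = PiM {..<n} (\<lambda>_. sample_measure Mx Pxt pi0 R)"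

definition qfun :: "('x \<Rightarrow> real \<Rightarrow> 'a \<Rightarrow> real measure) \<Rightarrow> 'x \<Rightarrow> real \<Rightarrow> 'a \<Rightarrow> real" where
  "qfun R x t a = (\<integral>r. r \<partial>(R x t a))"

definition Iphi :: "(real \<Rightarrow> 'l) \<Rightarrow> real \<Rightarrow> real \<Rightarrow> real" where
  "Iphi phi t t' = (if phi t = phi t' then 1 else 0)"

definition pphi :: "(real \<Rightarrow> real) \<Rightarrow> real \<Rightarrow> (real \<Rightarrow> 'l) \<Rightarrow> real \<Rightarrow> real" where
  "pphi pt T phi t' = (LINT s:{0..T}|lborel. pt s * Iphi phi s t')"

definition opfv_grad ::
  "nat \<Rightarrow> (real \<Rightarrow> real) \<Rightarrow> real \<Rightarrow> (real \<Rightarrow> 'l) \<Rightarrow> real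
   \<Rightarrow> ('x \<Rightarrow> real \<Rightarrow> 'a::finite \<Rightarrow> real) \<Rightarrow> ('x \<Rightarrow> real \<Rightarrow> 'a \<Rightarrow> real)
   \<Rightarrow> ('x \<Rightarrow> real \<Rightarrow> 'a \<Rightarrow> real) \<Rightarrow> ('x \<Rightarrow> real \<Rightarrow> 'a \<Rightarrow> 'z::real_normed_vector)
   \<Rightarrow> (nat \<Rightarrow> ('x, 'a) sample) \<Rightarrow> 'z" where
  "opfv_grad n pt T phi t' pz pi0 fhat s D =
     (1 / real n) *\<^sub>R (\<Sum>i<n. case D i of (x, t, a, r) \<Rightarrow>
        (Iphi phi t t' / pphi pt T phi t' * (pz x t' a / pi0 x t a) * (r - fhat x t a))
          *\<^sub>R s x t' a
        + (\<Sum>b\<in>UNIV. (pz x t' b * fhat x t' b) *\<^sub>R s x t' b))"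

definition true_grad ::
  "'x measure \<Rightarrow> real \<Rightarrow> ('x \<Rightarrow> real \<Rightarrow> 'a::finite \<Rightarrow> real)
   \<Rightarrow> ('x \<Rightarrow> real \<Rightarrow> 'a \<Rightarrow> real measure) \<Rightarrow> ('x \<Rightarrow> real \<Rightarrow> 'a \<Rightarrow> 'z::{banach, second_countable_topology})
   \<Rightarrow> 'z" where
  "true_grad Px' t' pz R s = (\<integral>x. (\<Sum>a\<in>UNIV. (pz x t' a * qfun R x t' a) *\<^sub>R s x t' a) \<partial>Px')"

end

theory Submission
  imports Defs
begin


lemma integral_bind_nonneg:
  fixes f :: "'b \<Rightarrow> real"
  assumes N: "N \<in> measurable M (subprob_algebra B)"
    and f[measurable]: "f \<in> borel_measurable B"
    and nn: "\<And>y. 0 \<le> f y"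
    and fin: "(\<integral>\<^sup>+x. \<integral>\<^sup>+y. ennreal (f y) \<partial>N x \<partial>M) < \<infinity>"
  shows "AE x in M. integrable (N x) f"
    and "integrable M (\<lambda>x. \<integral>y. f y \<partial>N x)"
    and "integrable (M \<bind> N) f"
    and "(\<integral>y. f y \<partial>(M \<bind> N)) = (\<integral>x. (\<integral>y. f y \<partial>N x) \<partial>M)"
proof -
  have Nm[measurable]: "(\<lambda>x. \<integral>\<^sup>+y. ennreal (f y) \<partial>N x) \<in> borel_measurable M"
    using measurable_compose[OF N nn_integral_measurable_subprob_algebra] by measurable
  have Im[measurable]: "(\<lambda>x. \<integral>y. f y \<partial>N x) \<in> borel_measurable M"
    using measurable_compose[OF N integral_measurable_subprob_algebra[OF f]] .
  have "AE x in M. (\<integral>\<^sup>+y. ennreal (f y) \<partial>N x) \<noteq> \<infinity>"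
    using fin by (intro nn_integral_PInf_AE) auto
  moreover have "AE x in M. x \<in> space M" by simp
  ultimately have ae: "AE x in M. integrable (N x) f \<and> (\<integral>\<^sup>+y. ennreal (f y) \<partial>N x) = ennreal (\<integral>y. f y \<partial>N x)"
  proof eventually_elim
    case (elim x)
    have s: "sets (N x) = sets B" using sets_kernel[OF N elim(2)] .
    have fm: "f \<in> borel_measurable (N x)" using f by (simp add: measurable_cong_sets[OF s refl])
    have i: "integrable (N x) f"
      using elim(1) fm nn by (auto simp: integrable_iff_bounded less_top)
    then show ?case using nn by (simp add: nn_integral_eq_integral)
  qed
  then show "AE x in M. integrable (N x) f" by auto
  have eq1: "(\<integral>\<^sup>+x. \<integral>\<^sup>+y. ennreal (f y) \<partial>N x \<partial>M) = (\<integral>\<^sup>+x. ennreal (\<integral>y. f y \<partial>N x) \<partial>M)"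
    using ae by (intro nn_integral_cong_AE) auto
  show iM: "integrable M (\<lambda>x. \<integral>y. f y \<partial>N x)"
    using fin eq1 nn by (auto simp: integrable_iff_bounded integral_nonneg)
  have bnd: "(\<integral>\<^sup>+y. ennreal (f y) \<partial>(M \<bind> N)) = (\<integral>\<^sup>+x. \<integral>\<^sup>+y. ennreal (f y) \<partial>N x \<partial>M)"
    by (rule nn_integral_bind[OF _ N]) measurable
  show iB: "integrable (M \<bind> N) f"
  proof (cases "space M = {}")
    case True then show ?thesis by (simp add: bind_empty integrable_count_space)
  next
    case False
    have s: "sets (M \<bind> N) = sets B" using sets_bind[OF sets_kernel[OF N] False] .
    show ?thesis using bnd fin nn by (auto simp: integrable_iff_bounded measurable_cong_sets[OF s refl])
  qed
  have "ennreal (\<integral>y. f y \<partial>(M \<bind> N)) = (\<integral>\<^sup>+y. ennreal (f y) \<partial>(M \<bind> N))"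
    using iB nn by (simp add: nn_integral_eq_integral)
  also have "\<dots> = ennreal (\<integral>x. (\<integral>y. f y \<partial>N x) \<partial>M)"
    using bnd eq1 iM nn by (simp add: nn_integral_eq_integral integral_nonneg)
  finally show "(\<integral>y. f y \<partial>(M \<bind> N)) = (\<integral>x. (\<integral>y. f y \<partial>N x) \<partial>M)"
    using nn by (simp add: integral_nonneg integral_nonneg_AE)
qed

lemma integral_bind_real:
  fixes f :: "'b \<Rightarrow> real"
  assumes N: "N \<in> measurable M (subprob_algebra B)"
    and f[measurable]: "f \<in> borel_measurable B"
    and fin: "(\<integral>\<^sup>+x. \<integral>\<^sup>+y. ennreal (norm (f y)) \<partial>N x \<partial>M) < \<infinity>"
  shows "(\<integral>y. f y \<partial>(M \<bind> N)) = (\<integral>x. (\<integral>y. f y \<partial>N x) \<partial>M)"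
proof -
  define P where "P y = max (f y) 0" for y
  define Q where "Q y = max (- f y) 0" for y
  have Pm[measurable]: "P \<in> borel_measurable B" and Qm[measurable]: "Q \<in> borel_measurable B" unfolding P_def Q_def by measurable
  have Pn: "\<And>y. 0 \<le> P y" and Qn: "\<And>y. 0 \<le> Q y" by (auto simp: P_def Q_def)
  have finP: "(\<integral>\<^sup>+x. \<integral>\<^sup>+y. ennreal (P y) \<partial>N x \<partial>M) < \<infinity>"
    by (rule le_less_trans[OF _ fin], intro nn_integral_mono) (auto simp: P_def)
  have finQ: "(\<integral>\<^sup>+x. \<integral>\<^sup>+y. ennreal (Q y) \<partial>N x \<partial>M) < \<infinity>"
    by (rule le_less_trans[OF _ fin], intro nn_integral_mono) (auto simp: Q_def)
  note RP = integral_bind_nonneg[OF N Pm Pn finP]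
  note RQ = integral_bind_nonneg[OF N Qm Qn finQ]
  have fPQ: "f = (\<lambda>y. P y - Q y)" by (auto simp: P_def Q_def fun_eq_iff)
  have "(\<integral>y. f y \<partial>(M \<bind> N)) = (\<integral>y. P y \<partial>(M \<bind> N)) - (\<integral>y. Q y \<partial>(M \<bind> N))"
    unfolding fPQ using RP(3) RQ(3) by (auto simp: P_def Q_def)
  also have "\<dots> = (\<integral>x. (\<integral>y. P y \<partial>N x) \<partial>M) - (\<integral>x. (\<integral>y. Q y \<partial>N x) \<partial>M)"
    using RP(4) RQ(4) by (auto simp: P_def Q_def)
  also have "\<dots> = (\<integral>x. (\<integral>y. P y \<partial>N x) - (\<integral>y. Q y \<partial>N x) \<partial>M)"
    using RP(2) RQ(2) by (auto simp: P_def Q_def)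
  also have "\<dots> = (\<integral>x. (\<integral>y. f y \<partial>N x) \<partial>M)"
  proof (rule integral_cong_AE)
    show "(\<lambda>x. (\<integral>y. P y \<partial>N x) - (\<integral>y. Q y \<partial>N x)) \<in> borel_measurable M"
      using measurable_compose[OF N integral_measurable_subprob_algebra[of P B]]
            measurable_compose[OF N integral_measurable_subprob_algebra[of Q B]] by measurable
    show "(\<lambda>x. (\<integral>y. f y \<partial>N x)) \<in> borel_measurable M"
      using measurable_compose[OF N integral_measurable_subprob_algebra[OF f]] .
    show "AE x in M. (\<integral>y. P y \<partial>N x) - (\<integral>y. Q y \<partial>N x) = (\<integral>y. f y \<partial>N x)"
      using RP(1) RQ(1) by eventually_elim (simp add: fPQ)
  qed
  finally show ?thesis .
qed

lemma integral_bind_eucl: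
  fixes f :: "'b \<Rightarrow> 'z::euclidean_space"
  assumes N: "N \<in> measurable M (subprob_algebra B)"
    and f[measurable]: "f \<in> borel_measurable B"
    and ae: "AE x in M. integrable (N x) f"
    and iM: "integrable M (\<lambda>x. \<integral>y. norm (f y) \<partial>N x)"
  shows "integrable (M \<bind> N) f"
    and "(\<integral>y. f y \<partial>(M \<bind> N)) = (\<integral>x. (\<integral>y. f y \<partial>N x) \<partial>M)"
proof -
  have eq: "(\<integral>\<^sup>+x. \<integral>\<^sup>+y. ennreal (norm (f y)) \<partial>N x \<partial>M) = (\<integral>\<^sup>+x. ennreal (\<integral>y. norm (f y) \<partial>N x) \<partial>M)"
    using ae by (intro nn_integral_cong_AE) (auto simp: nn_integral_eq_integral)
  have fin: "(\<integral>\<^sup>+x. \<integral>\<^sup>+y. ennreal (norm (f y)) \<partial>N x \<partial>M) < \<infinity>"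
    unfolding eq using iM by (auto simp: integrable_iff_bounded integral_nonneg)
  have bnd: "(\<integral>\<^sup>+y. ennreal (norm (f y)) \<partial>(M \<bind> N)) = (\<integral>\<^sup>+x. \<integral>\<^sup>+y. ennreal (norm (f y)) \<partial>N x \<partial>M)"
    by (rule nn_integral_bind[OF _ N]) measurable
  show iB: "integrable (M \<bind> N) f"
  proof (cases "space M = {}")
    case True then show ?thesis by (simp add: bind_empty integrable_count_space)
  next
    case False
    have s: "sets (M \<bind> N) = sets B" using sets_bind[OF sets_kernel[OF N] False] .
    show ?thesis using bnd fin by (auto simp: integrable_iff_bounded measurable_cong_sets[OF s refl])
  qed
  have Im: "(\<lambda>x. \<integral>y. f y \<partial>N x) \<in> borel_measurable M"
    using measurable_compose[OF N integral_measurable_subprob_algebra[OF f]] .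
  have iM2: "integrable M (\<lambda>x. \<integral>y. f y \<partial>N x)"
    by (rule Bochner_Integration.integrable_bound[OF iM Im]) (auto intro: integral_norm_bound order_trans)
  show "(\<integral>y. f y \<partial>(M \<bind> N)) = (\<integral>x. (\<integral>y. f y \<partial>N x) \<partial>M)"
  proof (rule euclidean_eqI)
    fix b :: 'z assume b: "b \<in> Basis"
    have fin2: "(\<integral>\<^sup>+x. \<integral>\<^sup>+y. ennreal (norm (f y \<bullet> b)) \<partial>N x \<partial>M) < \<infinity>"
      by (rule le_less_trans[OF _ fin], intro nn_integral_mono)
         (use b in \<open>auto simp: Basis_le_norm\<close>)
    have "(\<integral>y. f y \<partial>(M \<bind> N)) \<bullet> b = (\<integral>y. f y \<bullet> b \<partial>(M \<bind> N))"
      using iB by simp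
    also have "\<dots> = (\<integral>x. (\<integral>y. f y \<bullet> b \<partial>N x) \<partial>M)"
      by (rule integral_bind_real[OF N _ fin2]) measurable
    also have "\<dots> = (\<integral>x. (\<integral>y. f y \<partial>N x) \<bullet> b \<partial>M)"
    proof (rule integral_cong_AE)
      show "(\<lambda>x. \<integral>y. f y \<bullet> b \<partial>N x) \<in> borel_measurable M"
        using measurable_compose[OF N integral_measurable_subprob_algebra[of "\<lambda>y. f y \<bullet> b" B]] by measurable
      show "(\<lambda>x. (\<integral>y. f y \<partial>N x) \<bullet> b) \<in> borel_measurable M" using Im by measurable
      show "AE x in M. (\<integral>y. f y \<bullet> b \<partial>N x) = (\<integral>y. f y \<partial>N x) \<bullet> b"
        using ae by eventually_elim simp
    qed
    also have "\<dots> = (\<integral>x. (\<integral>y. f y \<partial>N x) \<partial>M) \<bullet> b" using iM2 by simp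
    finally show "(\<integral>y. f y \<partial>(M \<bind> N)) \<bullet> b = (\<integral>x. (\<integral>y. f y \<partial>N x) \<partial>M) \<bullet> b" .
  qed
qed

lemma action_meas_sets[simp]: "sets (action_meas w) = sets (count_space UNIV)"
  by (simp add: action_meas_def sets_point_measure_count_space)

lemma space_action_meas[simp]: "space (action_meas w) = UNIV"
  using sets_eq_imp_space_eq[OF action_meas_sets[of w]] by simp

lemma integral_action_meas:
  fixes f :: "'a::finite \<Rightarrow> 'b::{banach, second_countable_topology}"
  assumes "\<And>a. 0 \<le> w a"
  shows "integral\<^sup>L (action_meas w) f = (\<Sum>a\<in>UNIV. w a *\<^sub>R f a)"
  unfolding action_meas_def point_measure_def
  using assms by (subst integral_density) (auto simp: lebesgue_integral_count_space_finite)

lemma integrable_action_meas: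
  fixes f :: "'a::finite \<Rightarrow> 'b::{banach, second_countable_topology}"
  shows "integrable (action_meas w) f"
  unfolding action_meas_def
  by (auto simp: integrable_iff_bounded nn_integral_point_measure_finite ennreal_mult_less_top)

lemma prob_space_action_meas:
  assumes "\<And>a. 0 \<le> w a" "(\<Sum>a\<in>UNIV. w a) = 1"
  shows "prob_space (action_meas (w :: 'a::finite \<Rightarrow> real))"
proof
  have "emeasure (action_meas w) (space (action_meas w)) = (\<Sum>a\<in>UNIV. ennreal (w a))"
    using space_action_meas[of w] unfolding action_meas_def by (simp add: emeasure_point_measure_finite)
  also have "\<dots> = ennreal (\<Sum>a\<in>UNIV. w a)" using assms by (simp add: sum_ennreal)
  finally show "emeasure (action_meas w) (space (action_meas w)) = 1" using assms by simp
qed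

lemma prod_integral_scaleR:
  fixes G :: "'x \<Rightarrow> 'z::{banach, second_countable_topology}" and w :: "real \<Rightarrow> real"
  assumes M1: "prob_space M1" and M2: "prob_space M2"
    and G: "integrable M1 G" and w: "integrable M2 w"
  shows "integrable (M1 \<Otimes>\<^sub>M M2) (\<lambda>(x,t). w t *\<^sub>R G x)"
    and "(\<integral>xt. (case xt of (x,t) \<Rightarrow> w t *\<^sub>R G x) \<partial>(M1 \<Otimes>\<^sub>M M2)) = (\<integral>t. w t \<partial>M2) *\<^sub>R (\<integral>x. G x \<partial>M1)"
proof -
  interpret P: pair_prob_space M1 M2 using M1 M2 by (simp add: pair_prob_space_def pair_sigma_finite_def prob_space_imp_sigma_finite)
  have [measurable]: "G \<in> borel_measurable M1" "w \<in> borel_measurable M2" using G w by auto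
  show i: "integrable (M1 \<Otimes>\<^sub>M M2) (\<lambda>(x,t). w t *\<^sub>R G x)"
  proof (rule P.Fubini_integrable)
    show "(\<lambda>(x,t). w t *\<^sub>R G x) \<in> borel_measurable (M1 \<Otimes>\<^sub>M M2)" by measurable
    have "integrable M1 (\<lambda>x. (\<integral>t. norm (w t) \<partial>M2) * norm (G x))" using G by auto
    then show "integrable M1 (\<lambda>x. \<integral>y. norm (case (x, y) of (x,t) \<Rightarrow> w t *\<^sub>R G x) \<partial>M2)"
      by (simp add: mult.commute)
    show "AE x in M1. integrable M2 (\<lambda>y. case (x, y) of (x,t) \<Rightarrow> w t *\<^sub>R G x)"
      using w by auto
  qed
  have "(\<integral>xt. (case xt of (x,t) \<Rightarrow> w t *\<^sub>R G x) \<partial>(M1 \<Otimes>\<^sub>M M2)) = (\<integral>x. (\<integral>t. w t *\<^sub>R G x \<partial>M2) \<partial>M1)"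
    using P.integral_fst'[OF i] by simp
  also have "\<dots> = (\<integral>x. (\<integral>t. w t \<partial>M2) *\<^sub>R G x \<partial>M1)"
    using w by simp
  also have "\<dots> = (\<integral>t. w t \<partial>M2) *\<^sub>R (\<integral>x. G x \<partial>M1)" by simp
  finally show "(\<integral>xt. (case xt of (x,t) \<Rightarrow> w t *\<^sub>R G x) \<partial>(M1 \<Otimes>\<^sub>M M2)) = (\<integral>t. w t \<partial>M2) *\<^sub>R (\<integral>x. G x \<partial>M1)" .
qed



theorem theoremF2:
  fixes Mx :: "'x measure"
    and Px' :: "'x measure"
    and Pxt :: "('x \<times> real) measure"
    and pt :: "real \<Rightarrow> real"
    and T t' rmax :: real
    and n :: nat
    and pi0 :: "'x \<Rightarrow> real \<Rightarrow> 'a::finite \<Rightarrow> real"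
    and R :: "'x \<Rightarrow> real \<Rightarrow> 'a \<Rightarrow> real measure"
    and piz :: "'z::euclidean_space \<Rightarrow> 'x \<Rightarrow> real \<Rightarrow> 'a \<Rightarrow> real"
    and \<zeta> :: 'z
    and s :: "'x \<Rightarrow> real \<Rightarrow> 'a \<Rightarrow> 'z"
    and phi :: "real \<Rightarrow> 'l"
    and fhat :: "'x \<Rightarrow> real \<Rightarrow> 'a \<Rightarrow> real"
  assumes n_pos: "0 < n"
    and Mx_prob: "prob_space Mx"
    and T_nonneg: "0 \<le> T" and t'_gt: "T < t'"
    and pt_meas: "pt \<in> borel_measurable lborel"
    and pt_nonneg: "\<And>t. 0 \<le> pt t"
    and pt_supp: "\<And>t. t \<notin> {0..T} \<Longrightarrow> pt t = 0"
    and pt_prob: "(\<integral>\<^sup>+ t. ennreal (pt t) \<partial>lborel) = 1"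
    and stationary: "Pxt = Mx \<Otimes>\<^sub>M density lborel pt"
    and target_ctx: "Px' = Mx"
    and rmax_nonneg: "0 \<le> rmax"
    and R_prob: "\<And>x t a. prob_space (R x t a)"
    and R_sets: "\<And>x t a. sets (R x t a) = sets borel"
    and R_range: "\<And>x t a. 0 \<le> t \<Longrightarrow> AE r in R x t a. 0 \<le> r \<and> r \<le> rmax"
    and R_meas: "(\<lambda>(x, t, a). R x t a)
                   \<in> measurable (Mx \<Otimes>\<^sub>M (borel \<Otimes>\<^sub>M count_space UNIV)) (prob_algebra borel)"
    and pi0_nonneg: "\<And>x t a. 0 \<le> pi0 x t a"
    and pi0_sum: "\<And>x t. (\<Sum>a\<in>UNIV. pi0 x t a) = 1"
    and pi0_meas: "\<And>a. (\<lambda>(x, t). pi0 x t a) \<in> borel_measurable (Mx \<Otimes>\<^sub>M borel)"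
    and full_support: "\<And>x t a. x \<in> space Mx \<Longrightarrow> t \<in> {0..T} \<Longrightarrow> 0 < pi0 x t a"
    and piz_nonneg: "\<And>z x t a. 0 \<le> piz z x t a"
    and piz_sum: "\<And>z x t. (\<Sum>a\<in>UNIV. piz z x t a) = 1"
    and piz_meas: "\<And>a. (\<lambda>x. piz \<zeta> x t' a) \<in> borel_measurable Mx"
    and score: "\<And>x t a. 0 \<le> t \<Longrightarrow>
                  ((\<lambda>z. ln (piz z x t a)) has_derivative (\<lambda>h. s x t a \<bullet> h)) (at \<zeta>)"
    and s_int: "\<And>a. integrable Mx (\<lambda>x. s x t' a)"
    and phi_meas: "phi \<in> measurable borel (count_space UNIV)"
    and fhat_meas: "\<And>a. (\<lambda>(x, t). fhat x t a) \<in> borel_measurable (Mx \<Otimes>\<^sub>M borel)"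
    and fhat_s_int: "\<And>a. integrable Pxt (\<lambda>(x, t). fhat x t a *\<^sub>R s x t' a)"
    and fhat_s_int': "\<And>a. integrable Mx (\<lambda>x. fhat x t' a *\<^sub>R s x t' a)"
    and pphi_pos: "0 < pphi pt T phi t'"
  shows "(\<integral>D. opfv_grad n pt T phi t' (piz \<zeta>) pi0 fhat s D \<partial>data_measure n Mx Pxt pi0 R)
           - true_grad Px' t' (piz \<zeta>) R s
         = (\<integral>xt. (case xt of (x, t) \<Rightarrow>
              (\<Sum>a\<in>UNIV. (piz \<zeta> x t' a * (Iphi phi t t' / pphi pt T phi t')
                 * ((qfun R x t a - qfun R x t' a) - (fhat x t a - fhat x t' a))) *\<^sub>R s x t' a))
            \<partial>Pxt)"
proof -
  define p where "p = pphi pt T phi t'"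
  define S :: "('x, 'a) sample measure" where "S = sample_space Mx"
  define Dt where "Dt = density lborel pt"
  define C where "C x = (\<Sum>b\<in>UNIV. (piz \<zeta> x t' b * fhat x t' b) *\<^sub>R s x t' b)" for x
  define h where "h = (\<lambda>sm. case sm of (x, t, a, r) \<Rightarrow>
        (Iphi phi t t' / p * (piz \<zeta> x t' a / pi0 x t a) * (r - fhat x t a)) *\<^sub>R s x t' a + C x)"
  define K3 where "K3 x t a = R x t a \<bind> (\<lambda>r. return S (x, t, a, r))" for x t a
  define K2 where "K2 = (\<lambda>xt. action_meas (pi0 (fst xt) (snd xt)) \<bind> (\<lambda>a. K3 (fst xt) (snd xt) a))"
  have sm: "sample_measure Mx Pxt pi0 R = Pxt \<bind> K2"
    by (simp add: sample_measure_def K2_def K3_def S_def)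
  have sets_Dt: "sets Dt = sets borel" by (simp add: Dt_def)
  have sets_Pxt: "sets Pxt = sets (Mx \<Otimes>\<^sub>M borel)"
    unfolding stationary by (rule sets_pair_measure_cong) (auto simp: sets_Dt[unfolded Dt_def])
  have space_Pxt: "space Pxt = space Mx \<times> UNIV"
    using sets_eq_imp_space_eq[OF sets_Pxt] by (simp add: space_pair_measure)
  have Dt_prob: "prob_space Dt"
  proof
    show "emeasure Dt (space Dt) = 1"
      unfolding Dt_def using pt_meas pt_prob by (simp add: emeasure_density)
  qed
  have Pxt_prob: "prob_space Pxt"
    unfolding stationary using Mx_prob Dt_prob[unfolded Dt_def] by (rule prob_space_pair)
  have sm_meas[measurable]: "(\<lambda>x. s x t' a) \<in> borel_measurable Mx" for a using s_int[of a] by auto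
  have piz_m[measurable]: "(\<lambda>x. piz \<zeta> x t' a) \<in> borel_measurable Mx" for a using piz_meas .
  have pi0_m[measurable]: "(\<lambda>xt. pi0 (fst xt) (snd xt) a) \<in> borel_measurable (Mx \<Otimes>\<^sub>M borel)" for a
    using pi0_meas[of a] by (simp add: case_prod_beta')
  have fhat_m[measurable]: "(\<lambda>xt. fhat (fst xt) (snd xt) a) \<in> borel_measurable (Mx \<Otimes>\<^sub>M borel)" for a
    using fhat_meas[of a] by (simp add: case_prod_beta')
  have fhat_m'[measurable]: "(\<lambda>x. fhat x t' a) \<in> borel_measurable Mx" for a
    using measurable_compose[OF measurable_Pair[OF measurable_ident_sets[OF refl] measurable_const[of t']] fhat_m[of a]]
    by (simp add: space_pair_measure)
  have phi_m[measurable]: "phi \<in> measurable borel (count_space UNIV)" by (rule phi_meas)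
  have Iphi_m[measurable]: "(\<lambda>t. Iphi phi t t') \<in> borel_measurable borel"
    unfolding Iphi_def by measurable
  have C_m[measurable]: "C \<in> borel_measurable Mx" unfolding C_def by measurable
  have h_m[measurable]: "h \<in> borel_measurable S"
  proof -
    define F :: "'a \<Rightarrow> ('x, 'a) sample \<Rightarrow> 'z" where "F b sm = (case sm of (x, t, a, r) \<Rightarrow>
        (Iphi phi t t' / p * (piz \<zeta> x t' b / pi0 x t b) * (r - fhat x t b)) *\<^sub>R s x t' b + C x)" for b sm
    have Fm: "F b \<in> borel_measurable S" for b
    proof -
      let ?S = "Mx \<Otimes>\<^sub>M (borel \<Otimes>\<^sub>M (count_space UNIV \<Otimes>\<^sub>M borel)) :: ('x, 'a) sample measure"
      have proj1: "(\<lambda>sm::('x,'a) sample. (fst sm, fst (snd sm))) \<in> measurable ?S (Mx \<Otimes>\<^sub>M borel)" by measurable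
      have [measurable]: "(\<lambda>sm::('x,'a) sample. pi0 (fst sm) (fst (snd sm)) b) \<in> borel_measurable ?S"
        using measurable_compose[OF proj1 pi0_m[of b]] by simp
      have [measurable]: "(\<lambda>sm::('x,'a) sample. fhat (fst sm) (fst (snd sm)) b) \<in> borel_measurable ?S"
        using measurable_compose[OF proj1 fhat_m[of b]] by simp
      have [measurable]: "(\<lambda>sm::('x,'a) sample. s (fst sm) t' b) \<in> borel_measurable ?S"
        using measurable_compose[OF measurable_fst sm_meas[of b]] by (simp add: comp_def)
      have [measurable]: "(\<lambda>sm::('x,'a) sample. C (fst sm)) \<in> borel_measurable ?S"
        using measurable_compose[OF measurable_fst C_m] by (simp add: comp_def)
      have [measurable]: "(\<lambda>sm::('x,'a) sample. piz \<zeta> (fst sm) t' b) \<in> borel_measurable ?S"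
        using measurable_compose[OF measurable_fst piz_m[of b]] by (simp add: comp_def)
      show "F b \<in> borel_measurable S" unfolding F_def S_def sample_space_def case_prod_beta' by measurable
    qed
    have "(\<lambda>sm. F (fst (snd (snd sm))) sm) \<in> borel_measurable S"
      by (rule measurable_compose_countable'[where I=UNIV, OF Fm])
         (auto simp: S_def sample_space_def)
    moreover have "(\<lambda>sm. F (fst (snd (snd sm))) sm) = h" by (auto simp: F_def h_def fun_eq_iff)
    ultimately show ?thesis by simp
  qed
  have S_eq: "S = Mx \<Otimes>\<^sub>M (borel \<Otimes>\<^sub>M (count_space UNIV \<Otimes>\<^sub>M borel))"
    by (simp add: S_def sample_space_def)
  have K3_distr: "K3 x t a = distr (R x t a) S (\<lambda>r. (x, t, a, r))" if x: "x \<in> space Mx" for x t a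
  proof -
    have "(\<lambda>r. (x, t, a, r)) \<in> measurable borel S" unfolding S_eq using x by measurable
    then have m: "(\<lambda>r. (x, t, a, r)) \<in> measurable (R x t a) S"
      by (simp add: measurable_cong_sets[OF R_sets refl])
    show ?thesis unfolding K3_def
      by (rule bind_return_distr'[OF _ m]) (use prob_space.not_empty[OF R_prob] in auto)
  qed
  have f1: "(\<lambda>xt. action_meas (pi0 (fst xt) (snd xt))) \<in> (Mx \<Otimes>\<^sub>M borel) \<rightarrow>\<^sub>M prob_algebra (count_space UNIV)"
  proof (rule measurable_prob_algebraI)
    show "prob_space (action_meas (pi0 (fst xt) (snd xt)))" for xt
      by (rule prob_space_action_meas) (auto simp: pi0_nonneg pi0_sum)
    show "(\<lambda>xt. action_meas (pi0 (fst xt) (snd xt))) \<in> (Mx \<Otimes>\<^sub>M borel) \<rightarrow>\<^sub>M subprob_algebra (count_space UNIV)"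
    proof (rule measurable_subprob_algebra)
      show "subprob_space (action_meas (pi0 (fst xt) (snd xt)))" for xt
        by (rule prob_space_imp_subprob_space, rule prob_space_action_meas) (auto simp: pi0_nonneg pi0_sum)
      show "sets (action_meas (pi0 (fst xt) (snd xt))) = sets (count_space UNIV)" for xt by simp
      fix A :: "'a set"
      have "(\<lambda>xt. emeasure (action_meas (pi0 (fst xt) (snd xt))) A) = (\<lambda>xt. \<Sum>a\<in>A. ennreal (pi0 (fst xt) (snd xt) a))"
        unfolding action_meas_def by (simp add: emeasure_point_measure_finite)
      moreover have "(\<lambda>xt. \<Sum>a\<in>A. ennreal (pi0 (fst xt) (snd xt) a)) \<in> borel_measurable (Mx \<Otimes>\<^sub>M borel)"
        by measurable
      ultimately show "(\<lambda>xt. emeasure (action_meas (pi0 (fst xt) (snd xt))) A) \<in> borel_measurable (Mx \<Otimes>\<^sub>M borel)"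
        by simp
    qed
  qed
  have Rm: "(\<lambda>y. R (fst (fst y)) (snd (fst y)) (snd y)) \<in> ((Mx \<Otimes>\<^sub>M borel) \<Otimes>\<^sub>M count_space UNIV) \<rightarrow>\<^sub>M prob_algebra borel"
  proof -
    have re: "(\<lambda>y::('x \<times> real) \<times> 'a. (fst (fst y), snd (fst y), snd y)) \<in> ((Mx \<Otimes>\<^sub>M borel) \<Otimes>\<^sub>M count_space UNIV) \<rightarrow>\<^sub>M (Mx \<Otimes>\<^sub>M (borel \<Otimes>\<^sub>M count_space UNIV))"
      by measurable
    show ?thesis using measurable_compose[OF re R_meas] by (simp add: comp_def)
  qed
  have retm: "(\<lambda>(y, r). return S (fst (fst y), snd (fst y), snd y, r)) \<in> (((Mx \<Otimes>\<^sub>M borel) \<Otimes>\<^sub>M count_space UNIV) \<Otimes>\<^sub>M borel) \<rightarrow>\<^sub>M prob_algebra S"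
  proof -
    have re: "(\<lambda>(y::('x \<times> real) \<times> 'a, r::real). (fst (fst y), snd (fst y), snd y, r)) \<in> (((Mx \<Otimes>\<^sub>M borel) \<Otimes>\<^sub>M count_space UNIV) \<Otimes>\<^sub>M borel) \<rightarrow>\<^sub>M S"
      unfolding S_eq by measurable
    show ?thesis using measurable_compose[OF re measurable_return_prob_space] by (simp add: comp_def case_prod_beta')
  qed
  have g1: "(\<lambda>y. R (fst (fst y)) (snd (fst y)) (snd y) \<bind> (\<lambda>r. return S (fst (fst y), snd (fst y), snd y, r)))
      \<in> ((Mx \<Otimes>\<^sub>M borel) \<Otimes>\<^sub>M count_space UNIV) \<rightarrow>\<^sub>M prob_algebra S"
    by (rule measurable_bind_prob_space2[OF Rm retm])
  have g1': "(\<lambda>(xt, a). K3 (fst xt) (snd xt) a) \<in> ((Mx \<Otimes>\<^sub>M borel) \<Otimes>\<^sub>M count_space UNIV) \<rightarrow>\<^sub>M prob_algebra S"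
    using g1 by (simp add: K3_def case_prod_beta')
  have K2m_pa: "K2 \<in> (Mx \<Otimes>\<^sub>M borel) \<rightarrow>\<^sub>M prob_algebra S"
    unfolding K2_def by (rule measurable_bind_prob_space2[OF f1 g1'])
  have K2m: "K2 \<in> measurable Pxt (subprob_algebra S)"
    using measurable_prob_algebraD[OF K2m_pa] by (simp add: measurable_cong_sets[OF sets_Pxt refl])
  have K2_prob: "prob_space (K2 xt)" if "xt \<in> space Mx \<times> UNIV" for xt
    using measurable_space[OF K2m_pa, of xt] that by (simp add: space_prob_algebra space_pair_measure)
  have sample_prob: "prob_space (sample_measure Mx Pxt pi0 R)"
    unfolding sm
    by (rule prob_space.prob_space_bind[OF Pxt_prob _ K2m]) (auto simp: space_Pxt intro!: AE_I2 K2_prob)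
  define \<alpha> where "\<alpha> x t a = Iphi phi t t' / p * (piz \<zeta> x t' a / pi0 x t a)" for x t a
  have p_pos: "0 < p" using pphi_pos by (simp add: p_def)
  have Iphi_nn: "0 \<le> Iphi phi t t'" "Iphi phi t t' \<le> 1" for t by (auto simp: Iphi_def)
  have piz_le1: "piz \<zeta> x t a \<le> 1" for x t a
  proof -
    have "piz \<zeta> x t a \<le> (\<Sum>b\<in>UNIV. piz \<zeta> x t b)"
      by (rule member_le_sum) (auto simp: piz_nonneg)
    then show ?thesis by (simp add: piz_sum)
  qed
  have \<alpha>_nn: "0 \<le> \<alpha> x t a" for x t a
    unfolding \<alpha>_def using p_pos Iphi_nn piz_nonneg pi0_nonneg by simp
  have h_eq: "h (x, t, a, r) = (\<alpha> x t a * (r - fhat x t a)) *\<^sub>R s x t' a + C x" for x t a r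
    by (simp add: h_def \<alpha>_def)
  have R_r_int: "integrable (R x t a) (\<lambda>r. r)" if "0 \<le> t" for x t a
  proof (rule finite_measure.integrable_const_bound[where B=rmax])
    show "finite_measure (R x t a)" using R_prob prob_space_def by blast
    show "AE r in R x t a. norm r \<le> rmax" using R_range[OF that, of x a] by eventually_elim auto
    show "(\<lambda>r. r) \<in> borel_measurable (R x t a)" by (simp add: measurable_cong_sets[OF R_sets refl])
  qed
  have q_bound: "\<bar>qfun R x t a\<bar> \<le> rmax" if "0 \<le> t" for x t a
  proof -
    interpret prob_space "R x t a" by (rule R_prob)
    have "qfun R x t a \<le> rmax" unfolding qfun_def
      by (rule integral_le_const[OF R_r_int[OF that]]) (use R_range[OF that, of x a] in \<open>eventually_elim, auto\<close>)
    moreover have "0 \<le> qfun R x t a" unfolding qfun_def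
      by (rule integral_nonneg_AE) (use R_range[OF that, of x a] in \<open>eventually_elim, auto\<close>)
    ultimately show ?thesis by simp
  qed
  have K3_int: "integrable (K3 x t a) h"
    and K3_integral: "(\<integral>y. h y \<partial>K3 x t a) = (\<alpha> x t a * (qfun R x t a - fhat x t a)) *\<^sub>R s x t' a + C x"
    and K3_norm: "(\<integral>y. norm (h y) \<partial>K3 x t a) \<le> \<alpha> x t a * (rmax + \<bar>fhat x t a\<bar>) * norm (s x t' a) + norm (C x)"
    if x: "x \<in> space Mx" and t: "0 \<le> t" for x t a
  proof -
    interpret prob_space "R x t a" by (rule R_prob)
    have mp: "(\<lambda>r. (x, t, a, r)) \<in> measurable (R x t a) S"
      unfolding measurable_cong_sets[OF R_sets refl] S_eq using x by measurable
    have i1: "integrable (R x t a) (\<lambda>r. (\<alpha> x t a * (r - fhat x t a)) *\<^sub>R s x t' a + C x)"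
      using R_r_int[OF t] by (intro Bochner_Integration.integrable_add integrable_scaleR_left) auto
    show "integrable (K3 x t a) h"
      unfolding K3_distr[OF x] integrable_distr_eq[OF mp h_m] h_eq using i1 .
    have "(\<integral>y. h y \<partial>K3 x t a) = (\<integral>r. (\<alpha> x t a * (r - fhat x t a)) *\<^sub>R s x t' a + C x \<partial>R x t a)"
      unfolding K3_distr[OF x] integral_distr[OF mp h_m] h_eq ..
    also have "\<dots> = (\<alpha> x t a * (qfun R x t a - fhat x t a)) *\<^sub>R s x t' a + C x"
      using R_r_int[OF t] by (simp add: qfun_def prob_space)
    finally show "(\<integral>y. h y \<partial>K3 x t a) = (\<alpha> x t a * (qfun R x t a - fhat x t a)) *\<^sub>R s x t' a + C x" .
    have hm': "(\<lambda>y. norm (h y)) \<in> borel_measurable S" by measurable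
    have "(\<integral>y. norm (h y) \<partial>K3 x t a) = (\<integral>r. norm ((\<alpha> x t a * (r - fhat x t a)) *\<^sub>R s x t' a + C x) \<partial>R x t a)"
      unfolding K3_distr[OF x] integral_distr[OF mp hm'] h_eq ..
    also have "\<dots> \<le> \<alpha> x t a * (rmax + \<bar>fhat x t a\<bar>) * norm (s x t' a) + norm (C x)"
    proof (rule integral_le_const)
      show "integrable (R x t a) (\<lambda>r. norm ((\<alpha> x t a * (r - fhat x t a)) *\<^sub>R s x t' a + C x))"
        using i1 by auto
      show "AE r in R x t a. norm ((\<alpha> x t a * (r - fhat x t a)) *\<^sub>R s x t' a + C x)
              \<le> \<alpha> x t a * (rmax + \<bar>fhat x t a\<bar>) * norm (s x t' a) + norm (C x)"
        using R_range[OF t, of x a]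
      proof eventually_elim
        case (elim r)
        have "norm ((\<alpha> x t a * (r - fhat x t a)) *\<^sub>R s x t' a + C x)
              \<le> norm ((\<alpha> x t a * (r - fhat x t a)) *\<^sub>R s x t' a) + norm (C x)" by (rule norm_triangle_ineq)
        also have "norm ((\<alpha> x t a * (r - fhat x t a)) *\<^sub>R s x t' a) = \<alpha> x t a * \<bar>r - fhat x t a\<bar> * norm (s x t' a)"
          using \<alpha>_nn[of x t a] by (simp add: abs_mult)
        also have "\<dots> \<le> \<alpha> x t a * (rmax + \<bar>fhat x t a\<bar>) * norm (s x t' a)"
          using elim \<alpha>_nn[of x t a] by (intro mult_right_mono mult_left_mono) auto
        finally show ?case by simp
      qed
    qed
    finally show "(\<integral>y. norm (h y) \<partial>K3 x t a) \<le> \<alpha> x t a * (rmax + \<bar>fhat x t a\<bar>) * norm (s x t' a) + norm (C x)" .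
  qed
  define E where "E x t = (\<Sum>a\<in>UNIV. (piz \<zeta> x t' a * (Iphi phi t t' / p) * (qfun R x t a - fhat x t a)) *\<^sub>R s x t' a) + C x" for x t
  define G where "G x t = (\<Sum>a\<in>UNIV. piz \<zeta> x t' a * (Iphi phi t t' / p) * (rmax + \<bar>fhat x t a\<bar>) * norm (s x t' a)) + norm (C x)" for x t
  have K2_int: "integrable (K2 (x, t)) h"
    and K2_integral: "(\<integral>y. h y \<partial>K2 (x, t)) = E x t"
    and K2_norm: "(\<integral>y. norm (h y) \<partial>K2 (x, t)) \<le> G x t"
    if x: "x \<in> space Mx" and t: "t \<in> {0..T}" for x t
  proof -
    have t0: "0 \<le> t" using t by simp
    have K3_sp: "K3 x t a \<in> space (subprob_algebra S)" for a
      unfolding K3_distr[OF x] space_subprob_algebra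
      by (auto intro!: prob_space_imp_subprob_space prob_space.prob_space_distr R_prob
               simp: measurable_cong_sets[OF R_sets refl] S_eq x)
    have N2: "(\<lambda>a. K3 x t a) \<in> measurable (action_meas (pi0 x t)) (subprob_algebra S)"
      unfolding measurable_cong_sets[OF action_meas_sets refl] measurable_count_space_eq1
      using K3_sp by auto
    have K2eq: "K2 (x, t) = action_meas (pi0 x t) \<bind> (\<lambda>a. K3 x t a)" by (simp add: K2_def)
    note B = integral_bind_eucl[OF N2 h_m AE_I2[OF K3_int[OF x t0]] integrable_action_meas]
    show "integrable (K2 (x, t)) h" unfolding K2eq by (rule B(1))
    have pi0_pos: "0 < pi0 x t a" for a using full_support[OF x t] .
    have "(\<integral>y. h y \<partial>K2 (x, t)) = (\<Sum>a\<in>UNIV. pi0 x t a *\<^sub>R ((\<alpha> x t a * (qfun R x t a - fhat x t a)) *\<^sub>R s x t' a + C x))"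
      unfolding K2eq B(2) by (simp add: integral_action_meas pi0_nonneg K3_integral[OF x t0])
    also have "\<dots> = (\<Sum>a\<in>UNIV. (piz \<zeta> x t' a * (Iphi phi t t' / p) * (qfun R x t a - fhat x t a)) *\<^sub>R s x t' a + pi0 x t a *\<^sub>R C x)"
    proof (rule sum.cong[OF refl])
      fix a
      have "pi0 x t a * (\<alpha> x t a * (qfun R x t a - fhat x t a)) = piz \<zeta> x t' a * (Iphi phi t t' / p) * (qfun R x t a - fhat x t a)"
        using pi0_pos[of a] p_pos by (simp add: \<alpha>_def field_simps)
      then show "pi0 x t a *\<^sub>R ((\<alpha> x t a * (qfun R x t a - fhat x t a)) *\<^sub>R s x t' a + C x) =
          (piz \<zeta> x t' a * (Iphi phi t t' / p) * (qfun R x t a - fhat x t a)) *\<^sub>R s x t' a + pi0 x t a *\<^sub>R C x"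
        by (simp add: scaleR_add_right)
    qed
    also have "\<dots> = E x t"
      by (simp add: sum.distrib E_def scaleR_sum_left[symmetric] pi0_sum)
    finally show "(\<integral>y. h y \<partial>K2 (x, t)) = E x t" .
    have hnm: "(\<lambda>y. norm (h y)) \<in> borel_measurable S" by measurable
    note B' = integral_bind_eucl[OF N2 hnm AE_I2[OF integrable_norm[OF K3_int[OF x t0]]] integrable_action_meas]
    have "(\<integral>y. norm (h y) \<partial>K2 (x, t)) = (\<Sum>a\<in>UNIV. pi0 x t a * (\<integral>y. norm (h y) \<partial>K3 x t a))"
      unfolding K2eq B'(2) by (simp add: integral_action_meas pi0_nonneg)
    also have "\<dots> \<le> (\<Sum>a\<in>UNIV. pi0 x t a * (\<alpha> x t a * (rmax + \<bar>fhat x t a\<bar>) * norm (s x t' a) + norm (C x)))"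
      by (intro sum_mono mult_left_mono K3_norm[OF x t0] pi0_nonneg)
    also have "\<dots> = G x t"
    proof -
      have "pi0 x t a * (\<alpha> x t a * (rmax + \<bar>fhat x t a\<bar>) * norm (s x t' a) + norm (C x))
          = piz \<zeta> x t' a * (Iphi phi t t' / p) * (rmax + \<bar>fhat x t a\<bar>) * norm (s x t' a) + pi0 x t a * norm (C x)" for a
        using pi0_pos[of a] p_pos by (simp add: \<alpha>_def field_simps)
      then show ?thesis
        by (simp add: sum.distrib G_def sum_distrib_right[symmetric] pi0_sum)
    qed
    finally show "(\<integral>y. norm (h y) \<partial>K2 (x, t)) \<le> G x t" .
  qed
  have Pxt_eq: "Pxt = Mx \<Otimes>\<^sub>M Dt" by (simp add: stationary Dt_def)
  have sets_Dt': "sets Dt = sets lborel" by (simp add: Dt_def)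
  have Dt_fin: "finite_measure Dt" using Dt_prob prob_space_def by blast
  have Iw_m: "(\<lambda>t. Iphi phi t t' / p) \<in> borel_measurable Dt"
    unfolding measurable_cong_sets[OF sets_Dt' refl] by measurable
  have Iw_int: "integrable Dt (\<lambda>t. Iphi phi t t' / p)"
  proof (rule finite_measure.integrable_const_bound[OF Dt_fin _ Iw_m, where B="1/p"])
    show "AE t in Dt. norm (Iphi phi t t' / p) \<le> 1 / p"
      using p_pos by (intro AE_I2) (auto simp: Iphi_def)
  qed
  have one_int: "integrable Dt (\<lambda>t. 1::real)"
    using Dt_fin finite_measure.integrable_const by blast
  have one_integral: "(\<integral>t. (1::real) \<partial>Dt) = 1"
    using prob_space.prob_space[OF Dt_prob] by simp
  have Iw_integral: "(\<integral>t. Iphi phi t t' / p \<partial>Dt) = 1"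
  proof -
    have "(\<integral>t. Iphi phi t t' / p \<partial>Dt) = (\<integral>t. pt t *\<^sub>R (Iphi phi t t' / p) \<partial>lborel)"
      unfolding Dt_def by (rule integral_density) (use pt_meas pt_nonneg in auto)
    also have "\<dots> = (\<integral>t. pt t * Iphi phi t t' \<partial>lborel) / p" by simp
    also have "(\<integral>t. pt t * Iphi phi t t' \<partial>lborel) = pphi pt T phi t'"
      unfolding pphi_def set_lebesgue_integral_def
      by (rule Bochner_Integration.integral_cong[OF refl]) (use pt_supp in \<open>force simp: indicator_def\<close>)
    finally show ?thesis using p_pos by (simp add: p_def)
  qed
  have lift_int: "integrable Pxt (\<lambda>xt. w (snd xt) *\<^sub>R g (fst xt))"
    and lift_integral: "(\<integral>xt. w (snd xt) *\<^sub>R g (fst xt) \<partial>Pxt) = (\<integral>t. w t \<partial>Dt) *\<^sub>R (\<integral>x. g x \<partial>Mx)"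
    if g: "integrable Mx g" and w: "integrable Dt w" for g :: "'x \<Rightarrow> 'z" and w
  proof -
    note L = prod_integral_scaleR[OF Mx_prob Dt_prob g w]
    show "integrable Pxt (\<lambda>xt. w (snd xt) *\<^sub>R g (fst xt))" using L(1) by (simp add: Pxt_eq case_prod_beta')
    show "(\<integral>xt. w (snd xt) *\<^sub>R g (fst xt) \<partial>Pxt) = (\<integral>t. w t \<partial>Dt) *\<^sub>R (\<integral>x. g x \<partial>Mx)"
      using L(2) by (simp add: Pxt_eq case_prod_beta')
  qed
  have lift_int_r: "integrable Pxt (\<lambda>xt. w (snd xt) * g (fst xt))"
    if g: "integrable Mx g" and w: "integrable Dt w" for g :: "'x \<Rightarrow> real" and w
  proof -
    note L = prod_integral_scaleR[OF Mx_prob Dt_prob g w]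
    show ?thesis using L(1) by (simp add: Pxt_eq case_prod_beta')
  qed
  let ?P = "Mx \<Otimes>\<^sub>M borel :: ('x \<times> real) measure"
  have q_m: "(\<lambda>xt. qfun R (fst xt) (snd xt) a) \<in> borel_measurable ?P" for a
  proof -
    have re: "(\<lambda>xt::'x \<times> real. (fst xt, snd xt, a)) \<in> ?P \<rightarrow>\<^sub>M (Mx \<Otimes>\<^sub>M (borel \<Otimes>\<^sub>M count_space UNIV))"
      by measurable
    have k: "(\<lambda>xt. R (fst xt) (snd xt) a) \<in> ?P \<rightarrow>\<^sub>M subprob_algebra borel"
      using measurable_prob_algebraD[OF measurable_compose[OF re R_meas]] by (simp add: comp_def)
    show ?thesis unfolding qfun_def
      using measurable_compose[OF k integral_measurable_subprob_algebra[of "\<lambda>r. r" borel]] by simp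
  qed
  have q_m': "(\<lambda>x. qfun R x t' a) \<in> borel_measurable Mx" for a
    using measurable_compose[OF measurable_Pair[OF measurable_ident_sets[OF refl] measurable_const[of t']] q_m[of a]]
    by (simp add: space_pair_measure)
  have s_fst[measurable]: "(\<lambda>xt. s (fst xt) t' a) \<in> borel_measurable ?P" for a
    using measurable_compose[OF measurable_fst sm_meas[of a]] by (simp add: comp_def)
  have piz_fst[measurable]: "(\<lambda>xt. piz \<zeta> (fst xt) t' a) \<in> borel_measurable ?P" for a
    using measurable_compose[OF measurable_fst piz_m[of a]] by (simp add: comp_def)
  have C_fst[measurable]: "(\<lambda>xt. C (fst xt)) \<in> borel_measurable ?P"
    using measurable_compose[OF measurable_fst C_m] by (simp add: comp_def)
  have I_snd[measurable]: "(\<lambda>xt. Iphi phi (snd xt) t') \<in> borel_measurable ?P"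
    using measurable_compose[OF measurable_snd Iphi_m] by (simp add: comp_def)
  note q_m[measurable]
  have E_m: "(\<lambda>xt. E (fst xt) (snd xt)) \<in> borel_measurable Pxt"
    unfolding measurable_cong_sets[OF sets_Pxt refl] E_def by measurable
  have G_m: "(\<lambda>xt. G (fst xt) (snd xt)) \<in> borel_measurable Pxt"
    unfolding measurable_cong_sets[OF sets_Pxt refl] G_def by measurable
  have AE_T: "AE xt in Pxt. fst xt \<in> space Mx \<and> snd xt \<in> {0..T}"
  proof -
    interpret PP: pair_prob_space Mx Dt
      using Mx_prob Dt_prob by (simp add: pair_prob_space_def pair_sigma_finite_def prob_space_imp_sigma_finite)
    have "AE xt in Mx \<Otimes>\<^sub>M Dt. snd xt \<in> {0..T}"
    proof (rule PP.AE_pair_measure)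
      have "Measurable.pred ?P (\<lambda>xt. snd xt \<in> {0..T})" by measurable
      then show "{xt \<in> space (Mx \<Otimes>\<^sub>M Dt). snd xt \<in> {0..T}} \<in> sets (Mx \<Otimes>\<^sub>M Dt)"
        unfolding Pxt_eq[symmetric] pred_def by (simp add: sets_Pxt[symmetric] space_Pxt space_pair_measure)
      show "AE x in Mx. AE t in Dt. snd (x, t) \<in> {0..T}"
      proof (rule AE_I2)
        show "AE t in Dt. snd (x, t) \<in> {0..T}" for x
          unfolding Dt_def using pt_meas
          by (subst AE_density) (auto intro!: AE_I2, (metis atLeastAtMost_iff less_irrefl pt_supp)+)
      qed
    qed
    then have "AE xt in Pxt. snd xt \<in> {0..T}" unfolding Pxt_eq .
    moreover have "AE xt in Pxt. xt \<in> space Pxt" by simp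
    ultimately show ?thesis by eventually_elim (auto simp: space_Pxt)
  qed
  have s_int_P: "integrable Pxt (\<lambda>xt. norm (s (fst xt) t' a))" for a
    using lift_int_r[OF integrable_norm[OF s_int[of a]] one_int] by simp
  have fs_int_P: "integrable Pxt (\<lambda>xt. norm (fhat (fst xt) (snd xt) a *\<^sub>R s (fst xt) t' a))" for a
    using integrable_norm[OF fhat_s_int[of a]] by (simp add: case_prod_beta')
  have C_int: "integrable Mx C"
    unfolding C_def
  proof (intro Bochner_Integration.integrable_sum)
    fix b
    show "integrable Mx (\<lambda>x. (piz \<zeta> x t' b * fhat x t' b) *\<^sub>R s x t' b)"
    proof (rule Bochner_Integration.integrable_bound[OF fhat_s_int'[of b]])
      show "(\<lambda>x. (piz \<zeta> x t' b * fhat x t' b) *\<^sub>R s x t' b) \<in> borel_measurable Mx" by measurable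
      show "AE x in Mx. norm ((piz \<zeta> x t' b * fhat x t' b) *\<^sub>R s x t' b) \<le> norm (fhat x t' b *\<^sub>R s x t' b)"
      proof (rule AE_I2)
        fix x
        have "\<bar>piz \<zeta> x t' b\<bar> * (\<bar>fhat x t' b\<bar> * norm (s x t' b)) \<le> 1 * (\<bar>fhat x t' b\<bar> * norm (s x t' b))"
          by (rule mult_right_mono) (auto simp: piz_le1 piz_nonneg)
        then show "norm ((piz \<zeta> x t' b * fhat x t' b) *\<^sub>R s x t' b) \<le> norm (fhat x t' b *\<^sub>R s x t' b)"
          by (simp add: abs_mult mult.assoc)
      qed
    qed
  qed
  have G_int: "integrable Pxt (\<lambda>xt. G (fst xt) (snd xt))"
    unfolding G_def
  proof (intro Bochner_Integration.integrable_add Bochner_Integration.integrable_sum)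
    show "integrable Pxt (\<lambda>xt. norm (C (fst xt)))"
      using lift_int_r[OF integrable_norm[OF C_int] one_int] by simp
    fix a
    let ?g = "\<lambda>xt. piz \<zeta> (fst xt) t' a * (Iphi phi (snd xt) t' / p) * (rmax + \<bar>fhat (fst xt) (snd xt) a\<bar>) * norm (s (fst xt) t' a)"
    let ?b = "\<lambda>xt. (1/p) * (rmax * norm (s (fst xt) t' a) + norm (fhat (fst xt) (snd xt) a *\<^sub>R s (fst xt) t' a))"
    have bi: "integrable Pxt ?b" using s_int_P[of a] fs_int_P[of a] by auto
    show "integrable Pxt ?g"
    proof (rule Bochner_Integration.integrable_bound[OF bi])
      show "?g \<in> borel_measurable Pxt"
        unfolding measurable_cong_sets[OF sets_Pxt refl] by measurable
      show "AE xt in Pxt. norm (?g xt) \<le> norm (?b xt)"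
      proof (rule AE_I2)
        fix xt
        let ?c = "piz \<zeta> (fst xt) t' a * Iphi phi (snd xt) t'"
        have c01: "0 \<le> ?c" "?c \<le> 1"
          using piz_le1[of "fst xt" t' a] piz_nonneg[of \<zeta> "fst xt" t' a] Iphi_nn[of "snd xt"]
          by (auto intro: mult_le_one)
        have nn: "0 \<le> (rmax + \<bar>fhat (fst xt) (snd xt) a\<bar>) * norm (s (fst xt) t' a)" using rmax_nonneg by auto
        have "?g xt = (?c / p) * ((rmax + \<bar>fhat (fst xt) (snd xt) a\<bar>) * norm (s (fst xt) t' a))" by simp
        also have "\<dots> \<le> (1 / p) * ((rmax + \<bar>fhat (fst xt) (snd xt) a\<bar>) * norm (s (fst xt) t' a))"
          using c01 p_pos nn by (intro mult_right_mono divide_right_mono) auto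
        also have "\<dots> = ?b xt" by (simp add: algebra_simps)
        finally have "?g xt \<le> ?b xt" .
        moreover have "0 \<le> ?g xt" using c01 p_pos nn piz_nonneg Iphi_nn rmax_nonneg by auto
        ultimately show "norm (?g xt) \<le> norm (?b xt)"
          unfolding real_norm_def by (metis abs_ge_self abs_of_nonneg order_trans)
      qed
    qed
  qed
  have E_le_G: "norm (E x t) \<le> G x t" if t: "0 \<le> t" for x t
  proof -
    have "norm (E x t) \<le> (\<Sum>a\<in>UNIV. norm ((piz \<zeta> x t' a * (Iphi phi t t' / p) * (qfun R x t a - fhat x t a)) *\<^sub>R s x t' a)) + norm (C x)"
      unfolding E_def by (rule order_trans[OF norm_triangle_ineq add_right_mono[OF norm_sum]])
    also have "\<dots> \<le> G x t" unfolding G_def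
    proof (intro add_right_mono sum_mono)
      fix a
      have c: "0 \<le> piz \<zeta> x t' a * (Iphi phi t t' / p)" using piz_nonneg Iphi_nn p_pos by simp
      have "\<bar>qfun R x t a - fhat x t a\<bar> \<le> rmax + \<bar>fhat x t a\<bar>" using q_bound[OF t, of x a] by linarith
      then have "piz \<zeta> x t' a * (Iphi phi t t' / p) * \<bar>qfun R x t a - fhat x t a\<bar> * norm (s x t' a)
          \<le> piz \<zeta> x t' a * (Iphi phi t t' / p) * (rmax + \<bar>fhat x t a\<bar>) * norm (s x t' a)"
        using c by (intro mult_right_mono mult_left_mono) auto
      then show "norm ((piz \<zeta> x t' a * (Iphi phi t t' / p) * (qfun R x t a - fhat x t a)) *\<^sub>R s x t' a)
          \<le> piz \<zeta> x t' a * (Iphi phi t t' / p) * (rmax + \<bar>fhat x t a\<bar>) * norm (s x t' a)"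
        using c piz_nonneg[of \<zeta> x t' a] Iphi_nn[of t] p_pos by (simp add: abs_mult)
    qed
    finally show ?thesis .
  qed
  have E_int: "integrable Pxt (\<lambda>xt. E (fst xt) (snd xt))"
  proof (rule Bochner_Integration.integrable_bound[OF G_int E_m])
    show "AE xt in Pxt. norm (E (fst xt) (snd xt)) \<le> norm (G (fst xt) (snd xt))"
      using AE_T by eventually_elim (auto intro: order_trans[OF E_le_G])
  qed
  have ae1: "AE xt in Pxt. integrable (K2 xt) h"
    using AE_T by eventually_elim (metis K2_int prod.collapse)
  have iM1: "integrable Pxt (\<lambda>xt. \<integral>y. norm (h y) \<partial>K2 xt)"
  proof (rule Bochner_Integration.integrable_bound[OF G_int])
    show "(\<lambda>xt. \<integral>y. norm (h y) \<partial>K2 xt) \<in> borel_measurable Pxt"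
      using measurable_compose[OF K2m integral_measurable_subprob_algebra[of "\<lambda>y. norm (h y)" S]] by simp
    show "AE xt in Pxt. norm (\<integral>y. norm (h y) \<partial>K2 xt) \<le> norm (G (fst xt) (snd xt))"
      using AE_T
    proof eventually_elim
      case (elim xt)
      then have "(\<integral>y. norm (h y) \<partial>K2 xt) \<le> G (fst xt) (snd xt)"
        using K2_norm[of "fst xt" "snd xt"] by simp
      moreover have "0 \<le> (\<integral>y. norm (h y) \<partial>K2 xt)" by simp
      ultimately show ?case by simp
    qed
  qed
  note L1 = integral_bind_eucl[OF K2m h_m ae1 iM1]
  have sample_integral: "(\<integral>y. h y \<partial>sample_measure Mx Pxt pi0 R) = (\<integral>xt. E (fst xt) (snd xt) \<partial>Pxt)"
    unfolding sm L1(2)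
  proof (rule integral_cong_AE)
    show "(\<lambda>xt. \<integral>y. h y \<partial>K2 xt) \<in> borel_measurable Pxt"
      using measurable_compose[OF K2m integral_measurable_subprob_algebra[OF h_m]] by simp
    show "AE xt in Pxt. (\<integral>y. h y \<partial>K2 xt) = E (fst xt) (snd xt)"
      using AE_T by eventually_elim (metis K2_integral prod.collapse)
  qed (rule E_m)
  have sample_int: "integrable (sample_measure Mx Pxt pi0 R) h" unfolding sm by (rule L1(1))
  define SM where "SM = sample_measure Mx Pxt pi0 R"
  define DM where "DM = data_measure n Mx Pxt pi0 R"
  have SM_prob: "prob_space SM" using sample_prob by (simp add: SM_def)
  have sets_SM: "sets SM = sets S"
    unfolding SM_def sm
    by (rule sets_bind[OF sets_kernel[OF K2m]]) (use prob_space.not_empty[OF Pxt_prob] in auto)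
  have h_SM: "h \<in> borel_measurable SM" using h_m by (simp add: measurable_cong_sets[OF sets_SM refl])
  have comp: "distr DM SM (\<lambda>D. D i) = SM" if "i < n" for i
    unfolding DM_def data_measure_def SM_def[symmetric]
    by (rule distr_PiM_component) (use SM_prob that in auto)
  have cm: "(\<lambda>D. D i) \<in> measurable DM SM" if "i < n" for i
    unfolding DM_def data_measure_def SM_def[symmetric] by (rule measurable_component_singleton) (use that in auto)
  have hi_int: "integrable DM (\<lambda>D. h (D i))" if "i < n" for i
    using integrable_distr_eq[OF cm[OF that] h_SM] sample_int comp[OF that] by (simp add: SM_def)
  have hi_integral: "(\<integral>D. h (D i) \<partial>DM) = (\<integral>y. h y \<partial>SM)" if "i < n" for i
    using integral_distr[OF cm[OF that] h_SM] comp[OF that] by simp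
  have opfv_eq: "opfv_grad n pt T phi t' (piz \<zeta>) pi0 fhat s D = (1 / real n) *\<^sub>R (\<Sum>i<n. h (D i))" for D
    by (simp add: opfv_grad_def h_def C_def p_def)
  have data: "(\<integral>D. opfv_grad n pt T phi t' (piz \<zeta>) pi0 fhat s D \<partial>DM) = (\<integral>xt. E (fst xt) (snd xt) \<partial>Pxt)"
  proof -
    have "(\<integral>D. opfv_grad n pt T phi t' (piz \<zeta>) pi0 fhat s D \<partial>DM) = (1 / real n) *\<^sub>R (\<Sum>i<n. \<integral>D. h (D i) \<partial>DM)"
      unfolding opfv_eq by (simp add: Bochner_Integration.integral_sum hi_int)
    also have "\<dots> = (1 / real n) *\<^sub>R (\<Sum>i<n. \<integral>y. h y \<partial>SM)" by (simp add: hi_integral)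
    also have "\<dots> = (\<integral>y. h y \<partial>SM)" using n_pos by (simp add: sum_constant_scaleR)
    finally show ?thesis using sample_integral by (simp add: SM_def)
  qed
  define A where "A xt = (\<Sum>a\<in>UNIV. (piz \<zeta> (fst xt) t' a * (Iphi phi (snd xt) t' / p) * (qfun R (fst xt) (snd xt) a - fhat (fst xt) (snd xt) a)) *\<^sub>R s (fst xt) t' a)" for xt
  define B where "B x = (\<Sum>a\<in>UNIV. (piz \<zeta> x t' a * (qfun R x t' a - fhat x t' a)) *\<^sub>R s x t' a)" for x
  have t'0: "0 \<le> t'" using T_nonneg t'_gt by simp
  have B_int: "integrable Mx B"
    unfolding B_def
  proof (intro Bochner_Integration.integrable_sum)
    fix a
    have bi: "integrable Mx (\<lambda>x. rmax * norm (s x t' a) + norm (fhat x t' a *\<^sub>R s x t' a))"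
      by (rule Bochner_Integration.integrable_add[OF integrable_mult_right[OF integrable_norm[OF s_int[of a]]] integrable_norm[OF fhat_s_int'[of a]]])
    note q_m'[measurable]
    show "integrable Mx (\<lambda>x. (piz \<zeta> x t' a * (qfun R x t' a - fhat x t' a)) *\<^sub>R s x t' a)"
    proof (rule Bochner_Integration.integrable_bound[OF bi])
      show "(\<lambda>x. (piz \<zeta> x t' a * (qfun R x t' a - fhat x t' a)) *\<^sub>R s x t' a) \<in> borel_measurable Mx"
        by measurable
      show "AE x in Mx. norm ((piz \<zeta> x t' a * (qfun R x t' a - fhat x t' a)) *\<^sub>R s x t' a)
              \<le> norm (rmax * norm (s x t' a) + norm (fhat x t' a *\<^sub>R s x t' a))"
      proof (rule AE_I2)
        fix x
        have "\<bar>piz \<zeta> x t' a\<bar> * \<bar>qfun R x t' a - fhat x t' a\<bar> \<le> 1 * (rmax + \<bar>fhat x t' a\<bar>)"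
          using q_bound[OF t'0, of x a] piz_le1[of x t' a] piz_nonneg[of \<zeta> x t' a]
          by (intro mult_mono) auto
        then have "\<bar>piz \<zeta> x t' a\<bar> * \<bar>qfun R x t' a - fhat x t' a\<bar> * norm (s x t' a) \<le> (rmax + \<bar>fhat x t' a\<bar>) * norm (s x t' a)"
          by (intro mult_right_mono) auto
        then show "norm ((piz \<zeta> x t' a * (qfun R x t' a - fhat x t' a)) *\<^sub>R s x t' a)
              \<le> norm (rmax * norm (s x t' a) + norm (fhat x t' a *\<^sub>R s x t' a))"
        proof -
          have e1: "norm ((piz \<zeta> x t' a * (qfun R x t' a - fhat x t' a)) *\<^sub>R s x t' a)
              = \<bar>piz \<zeta> x t' a\<bar> * \<bar>qfun R x t' a - fhat x t' a\<bar> * norm (s x t' a)"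
            by (simp only: norm_scaleR abs_mult real_norm_def)
          have e2: "norm (rmax * norm (s x t' a) + norm (fhat x t' a *\<^sub>R s x t' a)) = (rmax + \<bar>fhat x t' a\<bar>) * norm (s x t' a)"
            using rmax_nonneg by (simp add: algebra_simps)
          show ?thesis unfolding e1 e2 by fact
        qed
      qed
    qed
  qed
  have C_int_P: "integrable Pxt (\<lambda>xt. C (fst xt))"
    using lift_int[OF C_int one_int] by simp
  have C_integral_P: "(\<integral>xt. C (fst xt) \<partial>Pxt) = (\<integral>x. C x \<partial>Mx)"
    using lift_integral[OF C_int one_int] one_integral by simp
  have E_eq: "E (fst xt) (snd xt) = A xt + C (fst xt)" for xt by (simp add: E_def A_def)
  have A_int: "integrable Pxt A"
  proof -
    have "integrable Pxt (\<lambda>xt. E (fst xt) (snd xt) - C (fst xt))" using E_int C_int_P by auto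
    then show ?thesis by (simp add: E_eq)
  qed
  have BI_int: "integrable Pxt (\<lambda>xt. (Iphi phi (snd xt) t' / p) *\<^sub>R B (fst xt))"
    by (rule lift_int[OF B_int Iw_int])
  have BI_integral: "(\<integral>xt. (Iphi phi (snd xt) t' / p) *\<^sub>R B (fst xt) \<partial>Pxt) = (\<integral>x. B x \<partial>Mx)"
    using lift_integral[OF B_int Iw_int] Iw_integral by simp
  have BC: "B x + C x = (\<Sum>a\<in>UNIV. (piz \<zeta> x t' a * qfun R x t' a) *\<^sub>R s x t' a)" for x
  proof -
    have "B x + C x = (\<Sum>a\<in>UNIV. (piz \<zeta> x t' a * (qfun R x t' a - fhat x t' a)) *\<^sub>R s x t' a + (piz \<zeta> x t' a * fhat x t' a) *\<^sub>R s x t' a)"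
      unfolding B_def C_def by (rule sum.distrib[symmetric])
    also have "\<dots> = (\<Sum>a\<in>UNIV. (piz \<zeta> x t' a * qfun R x t' a) *\<^sub>R s x t' a)"
    proof (rule sum.cong[OF refl])
      fix a
      have "piz \<zeta> x t' a * (qfun R x t' a - fhat x t' a) + piz \<zeta> x t' a * fhat x t' a = piz \<zeta> x t' a * qfun R x t' a"
        by (simp add: algebra_simps)
      then show "(piz \<zeta> x t' a * (qfun R x t' a - fhat x t' a)) *\<^sub>R s x t' a + (piz \<zeta> x t' a * fhat x t' a) *\<^sub>R s x t' a = (piz \<zeta> x t' a * qfun R x t' a) *\<^sub>R s x t' a"
        by (metis scaleR_add_left)
    qed
    finally show ?thesis .
  qed
  have tg: "true_grad Px' t' (piz \<zeta>) R s = (\<integral>x. B x \<partial>Mx) + (\<integral>x. C x \<partial>Mx)"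
  proof -
    have "true_grad Px' t' (piz \<zeta>) R s = (\<integral>x. B x + C x \<partial>Mx)"
      unfolding true_grad_def target_ctx BC ..
    also have "\<dots> = (\<integral>x. B x \<partial>Mx) + (\<integral>x. C x \<partial>Mx)" using B_int C_int by simp
    finally show ?thesis .
  qed
  have ring_id: "z * c * (q - f) - c * (z * (q' - f')) = z * c * ((q - q') - (f - f'))" for z c q f q' f' :: real
    by (simp add: algebra_simps)
  have rhs_pt: "(case xt of (x, t) \<Rightarrow>
              (\<Sum>a\<in>UNIV. (piz \<zeta> x t' a * (Iphi phi t t' / pphi pt T phi t')
                 * ((qfun R x t a - qfun R x t' a) - (fhat x t a - fhat x t' a))) *\<^sub>R s x t' a))
          = A xt - (Iphi phi (snd xt) t' / p) *\<^sub>R B (fst xt)" for xt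
  proof (cases xt)
    case (Pair x t)
    have "A xt - (Iphi phi (snd xt) t' / p) *\<^sub>R B (fst xt)
        = (\<Sum>a\<in>UNIV. (piz \<zeta> x t' a * (Iphi phi t t' / p) * (qfun R x t a - fhat x t a)) *\<^sub>R s x t' a
            - (Iphi phi t t' / p) *\<^sub>R ((piz \<zeta> x t' a * (qfun R x t' a - fhat x t' a)) *\<^sub>R s x t' a))"
      unfolding A_def B_def Pair by (simp add: scaleR_sum_right sum_subtractf)
    also have "\<dots> = (\<Sum>a\<in>UNIV. (piz \<zeta> x t' a * (Iphi phi t t' / pphi pt T phi t')
                 * ((qfun R x t a - qfun R x t' a) - (fhat x t a - fhat x t' a))) *\<^sub>R s x t' a)"
    proof (rule sum.cong[OF refl])
      fix a
      have cf: "piz \<zeta> x t' a * (Iphi phi t t' / p) * (qfun R x t a - fhat x t a)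
            - (Iphi phi t t' / p) * (piz \<zeta> x t' a * (qfun R x t' a - fhat x t' a))
          = piz \<zeta> x t' a * (Iphi phi t t' / pphi pt T phi t') * ((qfun R x t a - qfun R x t' a) - (fhat x t a - fhat x t' a))"
        unfolding p_def by (rule ring_id)
      then show "(piz \<zeta> x t' a * (Iphi phi t t' / p) * (qfun R x t a - fhat x t a)) *\<^sub>R s x t' a
            - (Iphi phi t t' / p) *\<^sub>R ((piz \<zeta> x t' a * (qfun R x t' a - fhat x t' a)) *\<^sub>R s x t' a)
          = (piz \<zeta> x t' a * (Iphi phi t t' / pphi pt T phi t')
                 * ((qfun R x t a - qfun R x t' a) - (fhat x t a - fhat x t' a))) *\<^sub>R s x t' a"
        by (simp only: scaleR_scaleR scaleR_diff_left[symmetric] cf)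
    qed
    finally show ?thesis unfolding Pair by simp
  qed
  have rhs: "(\<integral>xt. (case xt of (x, t) \<Rightarrow>
              (\<Sum>a\<in>UNIV. (piz \<zeta> x t' a * (Iphi phi t t' / pphi pt T phi t')
                 * ((qfun R x t a - qfun R x t' a) - (fhat x t a - fhat x t' a))) *\<^sub>R s x t' a))
            \<partial>Pxt) = (\<integral>xt. A xt - (Iphi phi (snd xt) t' / p) *\<^sub>R B (fst xt) \<partial>Pxt)"
    unfolding rhs_pt ..
  have fin: "(\<integral>xt. A xt - (Iphi phi (snd xt) t' / p) *\<^sub>R B (fst xt) \<partial>Pxt) = (\<integral>xt. A xt \<partial>Pxt) - (\<integral>x. B x \<partial>Mx)"
    using A_int BI_int BI_integral by simp
  have dat2: "(\<integral>xt. E (fst xt) (snd xt) \<partial>Pxt) = (\<integral>xt. A xt \<partial>Pxt) + (\<integral>x. C x \<partial>Mx)"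
    unfolding E_eq using A_int C_int_P C_integral_P by simp
  show ?thesis
    unfolding DM_def[symmetric] data rhs tg fin dat2 by simp
qed

end
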